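(* In the setting of the Cauchy problem below, the generating function $\mathcal D(z,w)=\sum_{(x,y)\in\mathbb Z_+^2} r(x,y)z^{-x-1}w^{-y-1}$ of the solution is (the expansion of) a rational function of $(z,w)$ if and only if the generating function of the initial data $$\Phi(z,w)=\sum_{(x,y)\in X}\varphi(x,y)z^{-x-1}w^{-y-1}$$ is (the expansion of) a rational function. Here: $P(z)=\sum_{\alpha=0}^{m} c_{\alpha,1}z^\alpha$, $Q(z)=\sum_{\alpha=0}^{m} c_{\alpha,0}z^\alpha$ are complex polynomials with $c_{m,1}\ne0$, $m\ge1$, $\deg Q<m$; $X=\{(x,y)\in\mathbb Z_+^2: x<m\text{ or }y=0\}$; $\varphi:X\to\mathbb C$ is arbitrary; and $r$ is the solution of $\sum_{\alpha=0}^{m} c_{\alpha,1} r(x+\alpha,y+1)-\sum_{\alpha=0}^{m} c_{\alpha,0} r(x+\alpha,y)=0$ for all $x,y\ge0$ with $r|_X=\varphi$.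
   Context: $\mathbb Z_+$ denotes the nonnegative integers. A formal Laurent series in $z^{-1},w^{-1}$ is called rational if it is the expansion (in the region where $|z|,|w|$ are large) of a rational function. *)

theory Defs
  imports "HOL-Computational_Algebra.Polynomial"
begin

text \<open>A formal series  F = sum over (x,y) in Z_+^2 of a(x,y) z^(-x-1) w^(-y-1)
  is represented by its coefficient function a.  A polynomial in z,w is
  represented as a polynomial in w whose coefficients are polynomials in z:
  coeff (coeff q b) a is the coefficient of z^a w^b.\<close>

text \<open>Coefficient of z^i w^j (i, j integers) in the product q * F (finite sum).\<close>
definition prod_coeff :: "complex poly poly \<Rightarrow> (nat \<Rightarrow> nat \<Rightarrow> complex) \<Rightarrow> int \<Rightarrow> int \<Rightarrow> complex" where
  "prod_coeff q a i j =
     (\<Sum>\<beta>\<le>degree q. \<Sum>\<alpha>\<le>degree (coeff q \<beta>).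
        if int \<alpha> - i - 1 \<ge> 0 \<and> int \<beta> - j - 1 \<ge> 0
        then coeff (coeff q \<beta>) \<alpha> * a (nat (int \<alpha> - i - 1)) (nat (int \<beta> - j - 1))
        else 0)"

text \<open>F is rational: there is a nonzero polynomial q(z,w) such that q * F is a
  polynomial p(z,w), i.e. F is the expansion of p/q.\<close>
definition rational_series :: "(nat \<Rightarrow> nat \<Rightarrow> complex) \<Rightarrow> bool" where
  "rational_series a \<longleftrightarrow>
     (\<exists>q. q \<noteq> 0 \<and> (\<forall>i j. (i < 0 \<or> j < 0) \<longrightarrow> prod_coeff q a i j = 0))"

end

theory Submission
  imports Defs
begin

definition pz :: "complex poly \<Rightarrow> (int \<Rightarrow> int \<Rightarrow> complex) \<Rightarrow> int \<Rightarrow> int \<Rightarrow> complex" where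
  "pz c b i j = (\<Sum>\<alpha>\<le>degree c. coeff c \<alpha> * b (i - int \<alpha>) j)"

definition pm :: "complex poly poly \<Rightarrow> (int \<Rightarrow> int \<Rightarrow> complex) \<Rightarrow> int \<Rightarrow> int \<Rightarrow> complex" where
  "pm q b i j = (\<Sum>\<beta>\<le>degree q. pz (coeff q \<beta>) b i (j - int \<beta>))"

definition ratl :: "(int \<Rightarrow> int \<Rightarrow> complex) \<Rightarrow> bool" where
  "ratl b \<longleftrightarrow> (\<exists>q. q \<noteq> 0 \<and> (\<forall>i j. (i < 0 \<or> j < 0) \<longrightarrow> pm q b i j = 0))"

definition emb :: "(nat \<Rightarrow> nat \<Rightarrow> complex) \<Rightarrow> int \<Rightarrow> int \<Rightarrow> complex" where
  "emb a i j = (if i < 0 \<and> j < 0 then a (nat (- i - 1)) (nat (- j - 1)) else 0)"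

lemma rational_series_ratl: "rational_series a \<longleftrightarrow> ratl (emb a)"
proof -
  have "prod_coeff q a i j = pm q (emb a) i j" for q i j
    unfolding prod_coeff_def pm_def pz_def emb_def
    by (intro sum.cong refl) (auto simp: algebra_simps)
  then show ?thesis unfolding rational_series_def ratl_def by simp
qed

lemma pz_bound: "degree c < K \<Longrightarrow> pz c b i j = (\<Sum>\<alpha><K. coeff c \<alpha> * b (i - int \<alpha>) j)"
  unfolding pz_def
  by (rule sum.mono_neutral_cong_left) (auto simp: coeff_eq_0)

lemma pm_bound: "degree q < K \<Longrightarrow> pm q b i j = (\<Sum>\<beta><K. pz (coeff q \<beta>) b i (j - int \<beta>))"
  unfolding pm_def
  by (rule sum.mono_neutral_cong_left) (auto simp: coeff_eq_0 pz_def)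

lemma pz_zero [simp]: "pz 0 b i j = 0" by (simp add: pz_def)
lemma pm_zero [simp]: "pm 0 b i j = 0" by (simp add: pm_def)
lemma pz_zero_ser [simp]: "pz c (\<lambda>_ _. 0) i j = 0" by (simp add: pz_def)
lemma pm_zero_ser [simp]: "pm q (\<lambda>_ _. 0) i j = 0" by (simp add: pm_def)

lemma pz_pCons: "pz (pCons a c) b i j = a * b i j + pz c b (i - 1) j"
proof -
  have "pz (pCons a c) b i j = (\<Sum>\<alpha><Suc (Suc (degree c)). coeff (pCons a c) \<alpha> * b (i - int \<alpha>) j)"
    by (rule pz_bound) (metis degree_pCons_le le_imp_less_Suc)
  also have "\<dots> = a * b i j + (\<Sum>\<alpha><Suc (degree c). coeff c \<alpha> * b (i - 1 - int \<alpha>) j)"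
    by (subst sum.lessThan_Suc_shift) (simp add: algebra_simps)
  also have "\<dots> = a * b i j + pz c b (i-1) j" by (subst pz_bound[of c "Suc (degree c)"]) auto
  finally show ?thesis .
qed

lemma pm_pCons: "pm (pCons a c) b i j = pz a b i j + pm c b i (j - 1)"
proof -
  have "pm (pCons a c) b i j = (\<Sum>\<beta><Suc (Suc (degree c)). pz (coeff (pCons a c) \<beta>) b i (j - int \<beta>))"
    by (rule pm_bound) (metis degree_pCons_le le_imp_less_Suc)
  also have "\<dots> = pz a b i j + (\<Sum>\<beta><Suc (degree c). pz (coeff c \<beta>) b i (j - 1 - int \<beta>))"
    by (subst sum.lessThan_Suc_shift) (simp add: algebra_simps)
  also have "\<dots> = pz a b i j + pm c b i (j-1)" by (subst pm_bound[of c "Suc (degree c)"]) auto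
  finally show ?thesis .
qed

lemma pz_add: "pz (c + d) b i j = pz c b i j + pz d b i j"
proof -
  define K where "K = Suc (max (degree c) (degree d))"
  have "degree (c + d) < K" using degree_add_le_max[of c d] unfolding K_def by linarith
  then show ?thesis
    by (simp add: pz_bound[of _ K] K_def sum.distrib distrib_right)
qed

lemma pm_add: "pm (c + d) b i j = pm c b i j + pm d b i j"
proof -
  define K where "K = Suc (max (degree c) (degree d))"
  have "degree (c + d) < K" using degree_add_le_max[of c d] unfolding K_def by linarith
  then show ?thesis
    by (simp add: pm_bound[of _ K] K_def sum.distrib pz_add)
qed

lemma pz_smult: "pz (smult a c) b i j = a * pz c b i j"
proof -
  have "degree (smult a c) < Suc (degree c)" using degree_smult_le[of a c] by linarith
  then show ?thesis
    by (simp only: pz_bound[of _ "Suc (degree c)"] coeff_smult sum_distrib_left mult.assoc lessI)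
qed

lemma pz_lin: "pz c (\<lambda>u v. x * f u v + y * g u v) = (\<lambda>i j. x * pz c f i j + y * pz c g i j)"
  by (auto simp: fun_eq_iff pz_def sum.distrib sum_distrib_left algebra_simps)

lemma pm_lin: "pm q (\<lambda>u v. x * f u v + y * g u v) = (\<lambda>i j. x * pm q f i j + y * pm q g i j)"
  by (auto simp: fun_eq_iff pm_def pz_lin sum.distrib sum_distrib_left algebra_simps)

lemma pz_mult: "pz (c * d) b = pz c (pz d b)"
proof (induction c rule: pCons_induct)
  case 0
  then show ?case by (auto simp: fun_eq_iff pz_def)
next
  case (pCons a c)
  show ?case
    by (auto simp: fun_eq_iff mult_pCons_left pz_add pz_smult pz_pCons pCons.IH)
qed

lemma pm_pCons_fun: "pm (pCons a c) b = (\<lambda>u v. pz a b u v + pm c b u (v - 1))"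
  by (auto simp: fun_eq_iff pm_pCons)

lemma pz_shiftsum: "pz c (\<lambda>u v. f u v + g u (v - 1)) i j = pz c f i j + pz c g i (j - 1)"
  by (simp add: pz_def sum.distrib distrib_left)

lemma pm_smult: "pm (smult c r) b = (\<lambda>i j. pz c (pm r b) i j)"
proof (induction r rule: pCons_induct)
  case 0
  then show ?case by (auto simp: fun_eq_iff)
next
  case (pCons d r)
  show ?case
    by (auto simp: fun_eq_iff pm_pCons pz_mult pCons.IH pm_pCons_fun pz_shiftsum)
qed

lemma pm_mult: "pm (q * r) b = pm q (pm r b)"
proof (induction q rule: pCons_induct)
  case 0
  then show ?case by (auto simp: fun_eq_iff)
next
  case (pCons c q)
  show ?case
    by (auto simp: fun_eq_iff mult_pCons_left pm_add pm_smult pm_pCons pCons.IH)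
qed


lemma pm_vanish:
  assumes "\<forall>i j. (i < 0 \<or> j < 0) \<longrightarrow> c i j = 0" "i < 0 \<or> j < 0"
  shows "pm q c i j = 0"
  using assms unfolding pm_def pz_def by (auto intro!: sum.neutral)

lemma ratl_zero: "ratl (\<lambda>_ _. 0)"
  unfolding ratl_def by (rule exI[of _ 1]) simp

lemma ratl_lin:
  assumes "ratl b1" "ratl b2"
  shows "ratl (\<lambda>i j. x * b1 i j + y * b2 i j)"
proof -
  obtain q1 where q1: "q1 \<noteq> 0" "\<forall>i j. (i<0 \<or> j<0) \<longrightarrow> pm q1 b1 i j = 0"
    using assms(1) ratl_def by auto
  obtain q2 where q2: "q2 \<noteq> 0" "\<forall>i j. (i<0 \<or> j<0) \<longrightarrow> pm q2 b2 i j = 0"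
    using assms(2) ratl_def by auto
  have e: "pm (q1*q2) (\<lambda>i j. x * b1 i j + y * b2 i j) i j
     = x * pm q2 (pm q1 b1) i j + y * pm q1 (pm q2 b2) i j" for i j
  proof -
    have "pm (q1*q2) (\<lambda>i j. x * b1 i j + y * b2 i j) i j
        = x * pm (q1*q2) b1 i j + y * pm q1 (pm q2 b2) i j"
      by (simp add: pm_lin pm_mult)
    also have "pm (q1*q2) b1 = pm q2 (pm q1 b1)" by (simp add: mult.commute[of q1 q2] pm_mult)
    finally show ?thesis .
  qed
  show ?thesis unfolding ratl_def
    using q1 q2 by (intro exI[of _ "q1*q2"]) (auto simp: e pm_vanish)
qed

lemma ratl_pm: assumes "ratl b" shows "ratl (pm p b)"
proof -
  obtain q where q: "q \<noteq> 0" "\<forall>i j. (i<0 \<or> j<0) \<longrightarrow> pm q b i j = 0"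
    using assms ratl_def by auto
  have "pm q (pm p b) = pm p (pm q b)"
    by (metis mult.commute pm_mult)
  then have "(i<0 \<or> j<0) \<longrightarrow> pm q (pm p b) i j = 0" for i j
    using pm_vanish[of "pm q b" i j p] q(2) by auto
  then show ?thesis unfolding ratl_def using q(1) by blast
qed

lemma ratl_pm_rev: assumes "p \<noteq> 0" "ratl (pm p b)" shows "ratl b"
proof -
  obtain q where q: "q \<noteq> 0" "\<forall>i j. (i<0 \<or> j<0) \<longrightarrow> pm q (pm p b) i j = 0"
    using assms ratl_def by auto
  then show ?thesis unfolding ratl_def using assms(1)
    by (intro exI[of _ "q*p"]) (auto simp: pm_mult)
qed

lemma pz_monom: "pz (monom a e) b i j = a * b (i - int e) j"
proof -
  have "pz (monom a e) b i j = (\<Sum>\<alpha><Suc e. coeff (monom a e) \<alpha> * b (i - int \<alpha>) j)"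
    by (rule pz_bound) (meson degree_monom_le le_imp_less_Suc)
  also have "(\<lambda>\<alpha>. coeff (monom a e) \<alpha> * b (i - int \<alpha>) j) = (\<lambda>\<alpha>. if \<alpha> = e then a * b (i - int e) j else 0)"
    by (auto simp: coeff_monom fun_eq_iff)
  finally show ?thesis by simp
qed

lemma pm_monom: "pm (monom a e) b i j = pz a b i (j - int e)"
proof -
  have "pm (monom a e) b i j = (\<Sum>\<beta><Suc e. pz (coeff (monom a e) \<beta>) b i (j - int \<beta>))"
    by (rule pm_bound) (meson degree_monom_le le_imp_less_Suc)
  also have "(\<lambda>\<beta>. pz (coeff (monom a e) \<beta>) b i (j - int \<beta>)) = (\<lambda>\<beta>. if \<beta> = e then pz a b i (j - int e) else 0)"
    by (auto simp: coeff_monom fun_eq_iff)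
  finally show ?thesis by simp
qed

lemma top_row:
  assumes "ratl b" "\<forall>i j. j > M \<longrightarrow> b i j = 0"
  shows "ratl (\<lambda>i j. if j = M then b i j else 0)"
proof -
  obtain q where q: "q \<noteq> 0" "\<forall>i j. (i<0 \<or> j<0) \<longrightarrow> pm q b i j = 0"
    using assms ratl_def by auto
  define d where "d = degree q"
  define s where "s = coeff q d"
  have s0: "s \<noteq> 0" using q(1) unfolding s_def d_def by simp
  have key: "pm q b i (M + int d) = pz s b i M" for i
  proof -
    have "pm q b i (M + int d) = (\<Sum>\<beta><Suc d. pz (coeff q \<beta>) b i (M + int d - int \<beta>))"
      by (rule pm_bound) (simp add: d_def)
    also have "\<dots> = (\<Sum>\<beta><d. pz (coeff q \<beta>) b i (M + int d - int \<beta>)) + pz s b i M"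
      by (simp add: s_def)
    also have "(\<Sum>\<beta><d. pz (coeff q \<beta>) b i (M + int d - int \<beta>)) = 0"
      using assms(2) by (intro sum.neutral) (auto simp: pz_def intro!: sum.neutral)
    finally show ?thesis by simp
  qed
  have e: "pm (monom s d) (\<lambda>i j. if j = M then b i j else 0) i j
      = (if j = M + int d then pm q b i j else 0)" for i j
    by (auto simp: pm_monom key pz_def)
  show ?thesis unfolding ratl_def
    using s0 q(2) by (intro exI[of _ "monom s d"]) (auto simp: e)
qed

lemma top_col:
  assumes "ratl b" "\<forall>i j. i > N \<longrightarrow> b i j = 0"
  shows "ratl (\<lambda>i j. if i = N then b i j else 0)"
proof -
  obtain q where q: "q \<noteq> 0" "\<forall>i j. (i<0 \<or> j<0) \<longrightarrow> pm q b i j = 0"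
    using assms ratl_def by auto
  define S where "S = {\<alpha>. \<exists>\<beta>. coeff (coeff q \<beta>) \<alpha> \<noteq> 0}"
  have "S \<subseteq> (\<Union>\<beta>\<in>{..degree q}. {..degree (coeff q \<beta>)})"
    unfolding S_def
  proof (clarsimp)
    fix x \<beta> assume h: "coeff (coeff q \<beta>) x \<noteq> 0"
    then have "coeff q \<beta> \<noteq> 0" by auto
    then have "\<beta> \<le> degree q" by (rule le_degree)
    moreover have "x \<le> degree (coeff q \<beta>)" using h by (rule le_degree)
    ultimately show "\<exists>xa\<in>{..degree q}. x \<le> degree (coeff q xa)" by auto
  qed
  then have finS: "finite S" by (rule finite_subset) auto
  have "coeff q (degree q) \<noteq> 0" using q(1) by simp
  then have "S \<noteq> {}" unfolding S_def by (metis (mono_tags, lifting) empty_Collect_eq leading_coeff_0_iff)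
  define e where "e = Max S"
  have eS: "e \<in> S" using finS \<open>S \<noteq> {}\<close> e_def by simp
  then obtain \<beta>0 where b0: "coeff (coeff q \<beta>0) e \<noteq> 0" unfolding S_def by auto
  have degle: "degree (coeff q \<beta>) \<le> e" for \<beta>
  proof (cases "coeff q \<beta> = 0")
    case True then show ?thesis by simp
  next
    case False
    then have "degree (coeff q \<beta>) \<in> S" unfolding S_def using leading_coeff_0_iff by blast
    then show ?thesis using finS e_def by simp
  qed
  define q' where "q' = map_poly (\<lambda>c. monom (coeff c e) e) q"
  have cq': "coeff q' \<beta> = monom (coeff (coeff q \<beta>) e) e" for \<beta>
    unfolding q'_def by (simp add: coeff_map_poly)
  have q'0: "q' \<noteq> 0"
  proof
    assume "q' = 0"
    then have "coeff q' \<beta>0 = 0" by simp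
    then show False using b0 cq' by simp
  qed
  have dq': "degree q' < Suc (degree q)"
    unfolding q'_def using map_poly_degree_leq le_imp_less_Suc by blast
  have colq: "pz (coeff q \<beta>) b (N + int e) j = coeff (coeff q \<beta>) e * b N j" for \<beta> j
  proof -
    have "pz (coeff q \<beta>) b (N + int e) j = (\<Sum>\<alpha><Suc e. coeff (coeff q \<beta>) \<alpha> * b (N + int e - int \<alpha>) j)"
      by (rule pz_bound) (simp add: degle le_imp_less_Suc)
    also have "\<dots> = (\<Sum>\<alpha><e. coeff (coeff q \<beta>) \<alpha> * b (N + int e - int \<alpha>) j) + coeff (coeff q \<beta>) e * b N j"
      by simp
    also have "(\<Sum>\<alpha><e. coeff (coeff q \<beta>) \<alpha> * b (N + int e - int \<alpha>) j) = 0"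
      using assms(2) by (intro sum.neutral) auto
    finally show ?thesis by simp
  qed
  have e1: "pm q' (\<lambda>i j. if i = N then b i j else 0) i j
      = (if i = N + int e then pm q b i j else 0)" for i j
  proof -
    have "pm q' (\<lambda>i j. if i = N then b i j else 0) i j
        = (\<Sum>\<beta><Suc (degree q). pz (coeff q' \<beta>) (\<lambda>i j. if i = N then b i j else 0) i (j - int \<beta>))"
      by (rule pm_bound[OF dq'])
    also have "\<dots> = (\<Sum>\<beta><Suc (degree q). if i = N + int e then coeff (coeff q \<beta>) e * b N (j - int \<beta>) else 0)"
      by (intro sum.cong refl) (auto simp: cq' pz_monom)
    also have "\<dots> = (if i = N + int e then pm q b i j else 0)"
      by (auto simp: pm_bound[of q "Suc (degree q)"] colq)
    finally show ?thesis .
  qed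
  show ?thesis unfolding ratl_def
    using q'0 q(2) by (intro exI[of _ q']) (auto simp: e1)
qed

lemma ratl_rows:
  assumes "ratl b" "\<forall>i j. j > M \<longrightarrow> b i j = 0"
  shows "ratl (\<lambda>i j. if j > M - int k then b i j else 0)"
proof (induction k)
  case 0
  have "(\<lambda>i j. if j > M - int 0 then b i j else 0) = (\<lambda>_ _. 0)" using assms(2) by (auto simp: fun_eq_iff)
  then show ?case using ratl_zero by simp
next
  case (Suc k)
  define b' where "b' = (\<lambda>i j. 1 * b i j + (-1) * (if j > M - int k then b i j else 0))"
  have r': "ratl b'" unfolding b'_def by (rule ratl_lin[OF assms(1) Suc.IH])
  have sup: "\<forall>i j. j > M - int k \<longrightarrow> b' i j = 0" unfolding b'_def by auto
  have "ratl (\<lambda>i j. if j = M - int k then b' i j else 0)" by (rule top_row[OF r' sup])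
  then have "ratl (\<lambda>i j. 1 * (if j > M - int k then b i j else 0) + 1 * (if j = M - int k then b' i j else 0))"
    by (rule ratl_lin[OF Suc.IH])
  moreover have "(\<lambda>i j. 1 * (if j > M - int k then b i j else 0) + 1 * (if j = M - int k then b' i j else 0))
     = (\<lambda>i j. if j > M - int (Suc k) then b i j else 0)" by (auto simp: b'_def fun_eq_iff)
  ultimately show ?case by simp
qed

lemma ratl_cols:
  assumes "ratl b" "\<forall>i j. i > N \<longrightarrow> b i j = 0"
  shows "ratl (\<lambda>i j. if i > N - int k then b i j else 0)"
proof (induction k)
  case 0
  have "(\<lambda>i j. if i > N - int 0 then b i j else 0) = (\<lambda>_ _. 0)" using assms(2) by (auto simp: fun_eq_iff)
  then show ?case using ratl_zero by simp
next
  case (Suc k)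
  define b' where "b' = (\<lambda>i j. 1 * b i j + (-1) * (if i > N - int k then b i j else 0))"
  have r': "ratl b'" unfolding b'_def by (rule ratl_lin[OF assms(1) Suc.IH])
  have sup: "\<forall>i j. i > N - int k \<longrightarrow> b' i j = 0" unfolding b'_def by auto
  have "ratl (\<lambda>i j. if i = N - int k then b' i j else 0)" by (rule top_col[OF r' sup])
  then have "ratl (\<lambda>i j. 1 * (if i > N - int k then b i j else 0) + 1 * (if i = N - int k then b' i j else 0))"
    by (rule ratl_lin[OF Suc.IH])
  moreover have "(\<lambda>i j. 1 * (if i > N - int k then b i j else 0) + 1 * (if i = N - int k then b' i j else 0))
     = (\<lambda>i j. if i > N - int (Suc k) then b i j else 0)" by (auto simp: b'_def fun_eq_iff)
  ultimately show ?case by simp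
qed


lemma pz_uminus: "pz (- c) b i j = - pz c b i j"
  by (simp add: pz_def sum_negf)

lemma pz_emb:
  assumes "i < 0" "j < 0"
  shows "pz c (emb a) i j = (\<Sum>\<alpha>\<le>degree c. coeff c \<alpha> * a (nat (-i-1) + \<alpha>) (nat (-j-1)))"
proof -
  have e: "nat (- (i - int \<alpha>) - 1) = nat (-i-1) + \<alpha>" for \<alpha> using assms by auto
  show ?thesis unfolding pz_def emb_def using assms
    by (intro sum.cong refl) (simp only: e, auto)
qed

lemma pz_emb_zero:
  assumes "i \<ge> int (degree c) \<or> v \<ge> 0"
  shows "pz c (emb a) i v = 0"
  unfolding pz_def emb_def using assms by (auto intro!: sum.neutral)

lemma sum_deg_ext:
  fixes c :: "complex poly"
  assumes "degree c \<le> n"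
  shows "(\<Sum>\<alpha>\<le>degree c. coeff c \<alpha> * f \<alpha>) = (\<Sum>\<alpha>\<le>n. coeff c \<alpha> * f \<alpha>)"
proof (rule sum.mono_neutral_cong_left)
  show "\<forall>i\<in>{..n} - {..degree c}. coeff c i * f i = 0" by (auto simp: coeff_eq_0)
qed (use assms in auto)

theorem mainTheorem3:
  fixes P Q :: "complex poly" and m :: nat
    and X :: "(nat \<times> nat) set"
    and \<phi> r :: "nat \<Rightarrow> nat \<Rightarrow> complex"
  assumes "m \<ge> 1" and "degree P = m" and "coeff P m \<noteq> 0" and "degree Q < m"
    and "X = {(x, y). x < m \<or> y = 0}"
    and "\<forall>x y. (\<Sum>\<alpha>\<le>m. coeff P \<alpha> * r (x + \<alpha>) (y + 1))
                 - (\<Sum>\<alpha>\<le>m. coeff Q \<alpha> * r (x + \<alpha>) y) = 0"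
    and "\<forall>x y. (x, y) \<in> X \<longrightarrow> r x y = \<phi> x y"
  shows "rational_series r \<longleftrightarrow>
         rational_series (\<lambda>x y. if (x, y) \<in> X then \<phi> x y else 0)"
proof -
  define \<phi>X where "\<phi>X = (\<lambda>x y. if (x, y) \<in> X then \<phi> x y else 0)"
  define D where "D = emb r"
  define \<Phi> where "\<Phi> = emb \<phi>X"
  define L :: "complex poly poly" where "L = pCons (- Q) (pCons P 0)"
  have P0: "P \<noteq> 0" using assms(3) by auto
  have L0: "L \<noteq> 0" unfolding L_def using P0 by simp
  have pmL: "pm L b i j = - pz Q b i j + pz P b i (j - 1)" for b i j
    unfolding L_def by (simp add: pm_pCons pz_uminus)
  have DPhi: "D u v = \<Phi> u v" if "u \<ge> - int m \<or> v \<ge> -1" for u v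
  proof (cases "u < 0 \<and> v < 0")
    case True
    then have "nat (-u-1) < m \<or> nat (-v-1) = 0" using that by auto
    then show ?thesis using True assms(5,7) unfolding D_def \<Phi>_def emb_def \<phi>X_def by auto
  qed (auto simp: D_def \<Phi>_def emb_def)
  have pzDPhi: "pz c D i v = pz c \<Phi> i v" if "degree c \<le> m" "i \<ge> 0 \<or> v \<ge> -1" for c i v
    unfolding pz_def using that by (intro sum.cong refl) (auto intro!: DPhi)
  have A: "pm L D i j = (if i < 0 \<and> j < 0 then 0 else pm L \<Phi> i j)" for i j
  proof (cases "i < 0 \<and> j < 0")
    case True
    define x where "x = nat (-i-1)"
    define y where "y = nat (-j-1)"
    have yj: "nat (-(j-1)-1) = y + 1" "nat (- j) = Suc y" using True unfolding y_def by auto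
    have "pm L D i j = - pz Q D i j + pz P D i (j - 1)" by (rule pmL)
    also have "pz Q D i j = (\<Sum>\<alpha>\<le>m. coeff Q \<alpha> * r (x + \<alpha>) y)"
      unfolding D_def using True assms(4)
      by (simp add: pz_emb x_def y_def sum_deg_ext[of Q m])
    also have "pz P D i (j - 1) = (\<Sum>\<alpha>\<le>m. coeff P \<alpha> * r (x + \<alpha>) (y + 1))"
      unfolding D_def using True assms(2)
      by (simp add: pz_emb x_def yj)
    moreover have R: "(\<Sum>\<alpha>\<le>m. coeff P \<alpha> * r (x + \<alpha>) (y + 1)) - (\<Sum>\<alpha>\<le>m. coeff Q \<alpha> * r (x + \<alpha>) y) = 0"
      using assms(6) by blast
    ultimately show ?thesis using True by simp
  next
    case False
    have "pm L D i j = - pz Q D i j + pz P D i (j - 1)" by (rule pmL)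
    also have "\<dots> = - pz Q \<Phi> i j + pz P \<Phi> i (j - 1)"
    proof -
      have "degree Q \<le> m" "degree P \<le> m" using assms(2,4) by auto
      moreover have "i \<ge> 0 \<or> j \<ge> -1" "i \<ge> 0 \<or> j - 1 \<ge> -1" using False by auto
      ultimately show ?thesis using pzDPhi by metis
    qed
    also have "\<dots> = pm L \<Phi> i j" by (rule pmL[symmetric])
    finally show ?thesis using False by auto
  qed
  have Dsupp: "\<forall>i j. j > -1 \<longrightarrow> D i j = 0" "\<forall>i j. i > -1 \<longrightarrow> D i j = 0"
    unfolding D_def emb_def by auto
  have D_to_Phi: "ratl \<Phi>" if rD: "ratl D"
  proof -
    define Rw where "Rw = (\<lambda>i j. if j > -1 - int 1 then D i j else 0)"
    have rRw: "ratl Rw" unfolding Rw_def by (rule ratl_rows[OF rD Dsupp(1)])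
    define D2 where "D2 = (\<lambda>i j. 1 * D i j + (-1) * Rw i j)"
    have rD2: "ratl D2" unfolding D2_def by (rule ratl_lin[OF rD rRw])
    have D2s: "\<forall>i j. i > -1 \<longrightarrow> D2 i j = 0" using Dsupp(2) unfolding D2_def Rw_def by auto
    define Cl where "Cl = (\<lambda>i j. if i > -1 - int m then D2 i j else 0)"
    have rCl: "ratl Cl" unfolding Cl_def by (rule ratl_cols[OF rD2 D2s])
    have "ratl (\<lambda>i j. 1 * Rw i j + 1 * Cl i j)" by (rule ratl_lin[OF rRw rCl])
    moreover have "(\<lambda>i j. 1 * Rw i j + 1 * Cl i j) = \<Phi>"
    proof (intro ext)
      fix i j
      show "1 * Rw i j + 1 * Cl i j = \<Phi> i j"
      proof (cases "i < 0 \<and> j < 0")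
        case True
        have "j = -1 \<or> j \<le> -2" using True by auto
        moreover have "i > -1 - int m \<longleftrightarrow> nat (-i-1) < m" using True by auto
        ultimately show ?thesis using True assms(5,7)
          unfolding Rw_def Cl_def D2_def D_def \<Phi>_def emb_def \<phi>X_def by auto
      next
        case False
        then show ?thesis unfolding Rw_def Cl_def D2_def D_def \<Phi>_def emb_def by auto
      qed
    qed
    ultimately show ?thesis by simp
  qed
  have Phi_to_D: "ratl D" if rP: "ratl \<Phi>"
  proof -
    define c where "c = pm L \<Phi>"
    have rc: "ratl c" unfolding c_def by (rule ratl_pm[OF rP])
    have cs1: "\<forall>i j. j > 0 \<longrightarrow> c i j = 0"
      unfolding c_def \<Phi>_def by (auto simp: pmL pz_emb_zero)
    have cs2: "\<forall>i j. i > int m - 1 \<longrightarrow> c i j = 0"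
      unfolding c_def \<Phi>_def using assms(2,4) by (auto simp: pmL pz_emb_zero)
    define Rw where "Rw = (\<lambda>i j. if j > 0 - int 1 then c i j else 0)"
    have rRw: "ratl Rw" unfolding Rw_def by (rule ratl_rows[OF rc cs1])
    define c2 where "c2 = (\<lambda>i j. 1 * c i j + (-1) * Rw i j)"
    have rc2: "ratl c2" unfolding c2_def by (rule ratl_lin[OF rc rRw])
    have c2s: "\<forall>i j. i > int m - 1 \<longrightarrow> c2 i j = 0" using cs2 unfolding c2_def Rw_def by auto
    define Cl where "Cl = (\<lambda>i j. if i > int m - 1 - int m then c2 i j else 0)"
    have rCl: "ratl Cl" unfolding Cl_def by (rule ratl_cols[OF rc2 c2s])
    have "ratl (\<lambda>i j. 1 * Rw i j + 1 * Cl i j)" by (rule ratl_lin[OF rRw rCl])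
    moreover have "(\<lambda>i j. 1 * Rw i j + 1 * Cl i j) = pm L D"
      by (auto simp: fun_eq_iff A Rw_def Cl_def c2_def c_def)
    ultimately have "ratl (pm L D)" by simp
    then show ?thesis by (rule ratl_pm_rev[OF L0])
  qed
  have "rational_series r \<longleftrightarrow> ratl D" by (simp add: D_def rational_series_ratl)
  also have "\<dots> \<longleftrightarrow> ratl \<Phi>" using D_to_Phi Phi_to_D by blast
  also have "\<dots> \<longleftrightarrow> rational_series \<phi>X" by (simp add: \<Phi>_def rational_series_ratl)
  finally show ?thesis unfolding \<phi>X_def .
qed

end
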